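(* There is an absolute constant $c>0$ such that for all integers $k\ge1$, all $n\le m$ and every $k$-monotone sequence $X\in[n]^m$, $\mathsf{F}^{k}(X)\le c\,k\cdot|X|$.
   Context: A sequence $X\in[n]^m$ is $k$-monotone if it can be partitioned into $k$ (not necessarily contiguous) subsequences that are all increasing or all decreasing. Standing assumption: $m\ge n$. $k$-finger cost: for a static BST $T$ on $[n]$, $d_T(a,b)$ is the number of edges between $a$ and $b$ in $T$. A $k$-finger strategy is an initial vector $\vec\ell\in[n]^k$ and $\vec f\in[k]^m$, finger $f_t$ serving $x_t$, with cost $\sum_{t=1}^m(1+d_T(x_t,p_t))$ where $p_t$ is the position of finger $f_t$ before time $t$ (its last served key, or $\ell_{f_t}$). $\mathsf{F}^k_T(X)$ is the minimum such cost and $\mathsf{F}^k(X)=\min_T\mathsf{F}^k_T(X)$ over BSTs $T$ on $[n]$. *)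

theory Defs
  imports Complex_Main "HOL-Library.Tree"
begin

definition is_bst_on :: "nat \<Rightarrow> nat tree \<Rightarrow> bool" where
  "is_bst_on n T \<longleftrightarrow> inorder T = [1..<n+1]"

fun search_path :: "nat tree \<Rightarrow> nat \<Rightarrow> nat list" where
  "search_path Leaf a = []"
| "search_path (Node l x r) a =
     x # (if a < x then search_path l a else if x < a then search_path r a else [])"

text \<open>Number of edges between keys a and b in T: the path a -- lca -- b consists of the
  nodes on exactly one of the two root paths plus the lca.\<close>
definition tdist :: "nat tree \<Rightarrow> nat \<Rightarrow> nat \<Rightarrow> nat" where
  "tdist T a b = card (set (search_path T a) - set (search_path T b))
               + card (set (search_path T b) - set (search_path T a))"

fun finger_cost :: "nat tree \<Rightarrow> (nat \<Rightarrow> nat) \<Rightarrow> nat list \<Rightarrow> nat list \<Rightarrow> nat" where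
  "finger_cost T pos (x # xs) (f # fs) = 1 + tdist T x (pos f) + finger_cost T (pos(f := x)) xs fs"
| "finger_cost T pos _ _ = 0"

definition Fk_T :: "nat \<Rightarrow> nat \<Rightarrow> nat tree \<Rightarrow> nat list \<Rightarrow> nat" where
  "Fk_T k n T X = (LEAST c. \<exists>l fs. (\<forall>i<k. l i \<in> {1..n}) \<and> length fs = length X
                        \<and> set fs \<subseteq> {0..<k} \<and> c = finger_cost T l X fs)"

definition Fk :: "nat \<Rightarrow> nat \<Rightarrow> nat list \<Rightarrow> nat" where
  "Fk k n X = (LEAST c. \<exists>T. is_bst_on n T \<and> c = Fk_T k n T X)"

definition k_monotone :: "nat \<Rightarrow> nat list \<Rightarrow> bool" where
  "k_monotone k X \<longleftrightarrow> (\<exists>g. (\<forall>t<length X. g t < k) \<and>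
     ((\<forall>i j. i < j \<and> j < length X \<and> g i = g j \<longrightarrow> X ! i \<le> X ! j) \<or>
      (\<forall>i j. i < j \<and> j < length X \<and> g i = g j \<longrightarrow> X ! i \<ge> X ! j)))"

end

theory Submission
  imports Defs
begin

fun spine :: "nat \<Rightarrow> nat \<Rightarrow> nat tree" where
  "spine i 0 = Leaf"
| "spine i (Suc j) = Node Leaf i (spine (Suc i) j)"

lemma inorder_spine: "inorder (spine i j) = [i..<i+j]"
  by (induction j arbitrary: i) (auto simp: upt_conv_Cons)

lemma sp_spine: "i \<le> a \<Longrightarrow> a < i + j \<Longrightarrow> set (search_path (spine i j) a) = {i..a}"
proof (induction j arbitrary: i)
  case 0 then show ?case by simp
next
  case (Suc j)
  show ?case
  proof (cases "i < a")
    case True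
    then have "set (search_path (spine (Suc i) j) a) = {Suc i..a}" using Suc by auto
    then show ?thesis using True by auto
  next
    case False
    then show ?thesis using Suc by auto
  qed
qed

lemma tdist_spine:
  assumes "a \<in> {1..n}" "b \<in> {1..n}"
  shows "tdist (spine 1 n) a b = (a - b) + (b - a)"
proof -
  have "set (search_path (spine 1 n) a) = {1..a}" "set (search_path (spine 1 n) b) = {1..b}"
    using assms by (auto intro!: sp_spine)
  moreover have "{1..a} - {1..b} = {Suc b..a}" "{1..b} - {1..a} = {Suc a..b}" for a b :: nat by auto
  ultimately show ?thesis unfolding tdist_def by simp
qed

lemma bst_spine: "is_bst_on n (spine 1 n)"
  unfolding is_bst_on_def by (simp add: inorder_spine)

lemma sum_upd:
  fixes h :: "nat \<Rightarrow> int" and k f x :: nat and pos :: "nat \<Rightarrow> nat"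
  assumes "f < k"
  shows "(\<Sum>g<k. h ((pos(f:=x)) g)) = (\<Sum>g<k. h (pos g)) - h (pos f) + h x"
proof -
  have fin: "f \<in> {..<k}" using assms by simp
  have a: "(\<Sum>g<k. h ((pos(f:=x)) g)) = h ((pos(f:=x)) f) + (\<Sum>g\<in>{..<k}-{f}. h ((pos(f:=x)) g))"
    using sum.remove[of "{..<k}" f "\<lambda>g. h ((pos(f:=x)) g)"] fin finite_lessThan by blast
  have b: "(\<Sum>g<k. h (pos g)) = h (pos f) + (\<Sum>g\<in>{..<k}-{f}. h (pos g))"
    using sum.remove[of "{..<k}" f "\<lambda>g. h (pos g)"] fin finite_lessThan by blast
  have c: "(\<Sum>g\<in>{..<k}-{f}. h ((pos(f:=x)) g)) = (\<Sum>g\<in>{..<k}-{f}. h (pos g))"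
    by (rule sum.cong) auto
  show ?thesis using a b c by simp
qed

lemma inc_bound:
  assumes T: "\<forall>a\<in>{1..n}. \<forall>b\<in>{1..n}. tdist T a b = (a-b)+(b-a)"
  shows "length fs = length xs \<Longrightarrow> set xs \<subseteq> {1..n} \<Longrightarrow> (\<forall>f<k. pos f \<in> {1..n}) \<Longrightarrow>
    (\<forall>t<length xs. fs!t < k \<and> pos (fs!t) \<le> xs!t) \<Longrightarrow>
    (\<forall>s t. s<t \<and> t<length xs \<and> fs!s = fs!t \<longrightarrow> xs!s \<le> xs!t) \<Longrightarrow>
    int (finger_cost T pos xs fs) \<le> int (length xs) + (\<Sum>f<k. int n - int (pos f))"
proof (induction xs arbitrary: fs pos)
  case Nil
  then show ?case by (auto intro!: sum_nonneg)
next
  case (Cons x xs)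
  obtain f fs' where fs: "fs = f # fs'" using Cons.prems(1) by (cases fs) auto
  have fk: "f < k" and pf: "pos f \<le> x" using Cons.prems(4) fs by auto
  have xn: "x \<in> {1..n}" using Cons.prems(2) by auto
  have pfn: "pos f \<in> {1..n}" using Cons.prems(3) fk by auto
  have td: "tdist T x (pos f) = x - pos f" using T xn pfn pf by auto
  have IH: "int (finger_cost T (pos(f:=x)) xs fs') \<le> int (length xs) + (\<Sum>g<k. int n - int ((pos(f:=x)) g))"
  proof (rule Cons.IH)
    show "length fs' = length xs" using Cons.prems(1) fs by simp
    show "set xs \<subseteq> {1..n}" using Cons.prems(2) by simp
    show "\<forall>g<k. (pos(f := x)) g \<in> {1..n}" using Cons.prems(3) xn by auto
    show "\<forall>t<length xs. fs' ! t < k \<and> (pos(f := x)) (fs' ! t) \<le> xs ! t"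
    proof (intro allI impI conjI)
      fix t assume t: "t < length xs"
      show "fs' ! t < k" using Cons.prems(4) t fs by (metis Suc_less_eq length_Cons nth_Cons_Suc)
      show "(pos(f := x)) (fs' ! t) \<le> xs ! t"
      proof (cases "fs' ! t = f")
        case True
        then have "(x#xs)!0 \<le> (x#xs)!(Suc t)" using Cons.prems(5) t fs by (metis length_Cons not_less_eq not_less0 nth_Cons_0 nth_Cons_Suc) 
        then show ?thesis using True by simp
      next
        case False
        then show ?thesis using Cons.prems(4) t fs by (metis Suc_less_eq fun_upd_other length_Cons nth_Cons_Suc)
      qed
    qed
    show "\<forall>s t. s < t \<and> t < length xs \<and> fs' ! s = fs' ! t \<longrightarrow> xs ! s \<le> xs ! t"
    proof (intro allI impI)
      fix s t assume a: "s < t \<and> t < length xs \<and> fs' ! s = fs' ! t"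
      then have "(x#xs)!(Suc s) \<le> (x#xs)!(Suc t)" using Cons.prems(5) fs
        by (metis Suc_less_eq length_Cons nth_Cons_Suc)
      then show "xs ! s \<le> xs ! t" by simp
    qed
  qed
  have su: "(\<Sum>g<k. int n - int ((pos(f:=x)) g)) = (\<Sum>g<k. int n - int (pos g)) - (int n - int (pos f)) + (int n - int x)"
    using sum_upd[OF fk, of "\<lambda>v. int n - int v" pos x] by simp
  show ?case using IH su td pf fs by simp
qed

lemma dec_bound:
  assumes T: "\<forall>a\<in>{1..n}. \<forall>b\<in>{1..n}. tdist T a b = (a-b)+(b-a)"
  shows "length fs = length xs \<Longrightarrow> set xs \<subseteq> {1..n} \<Longrightarrow> (\<forall>f<k. pos f \<in> {1..n}) \<Longrightarrow>
    (\<forall>t<length xs. fs!t < k \<and> xs!t \<le> pos (fs!t)) \<Longrightarrow>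
    (\<forall>s t. s<t \<and> t<length xs \<and> fs!s = fs!t \<longrightarrow> xs!s \<ge> xs!t) \<Longrightarrow>
    int (finger_cost T pos xs fs) \<le> int (length xs) + (\<Sum>f<k. int (pos f))"
proof (induction xs arbitrary: fs pos)
  case Nil
  then show ?case by (auto intro!: sum_nonneg)
next
  case (Cons x xs)
  obtain f fs' where fs: "fs = f # fs'" using Cons.prems(1) by (cases fs) auto
  have fk: "f < k" and pf: "x \<le> pos f" using Cons.prems(4) fs by auto
  have xn: "x \<in> {1..n}" using Cons.prems(2) by auto
  have pfn: "pos f \<in> {1..n}" using Cons.prems(3) fk by auto
  have td: "tdist T x (pos f) = pos f - x" using T xn pfn pf by auto
  have IH: "int (finger_cost T (pos(f:=x)) xs fs') \<le> int (length xs) + (\<Sum>g<k. int ((pos(f:=x)) g))"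
  proof (rule Cons.IH)
    show "length fs' = length xs" using Cons.prems(1) fs by simp
    show "set xs \<subseteq> {1..n}" using Cons.prems(2) by simp
    show "\<forall>g<k. (pos(f := x)) g \<in> {1..n}" using Cons.prems(3) xn by auto
    show "\<forall>t<length xs. fs' ! t < k \<and> xs ! t \<le> (pos(f := x)) (fs' ! t)"
    proof (intro allI impI conjI)
      fix t assume t: "t < length xs"
      show "fs' ! t < k" using Cons.prems(4) t fs by (metis Suc_less_eq length_Cons nth_Cons_Suc)
      show "xs ! t \<le> (pos(f := x)) (fs' ! t)"
      proof (cases "fs' ! t = f")
        case True
        then have "(x#xs)!0 \<ge> (x#xs)!(Suc t)" using Cons.prems(5) t fs by (metis length_Cons not_less_eq not_less0 nth_Cons_0 nth_Cons_Suc) 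
        then show ?thesis using True by simp
      next
        case False
        then show ?thesis using Cons.prems(4) t fs by (metis Suc_less_eq fun_upd_other length_Cons nth_Cons_Suc)
      qed
    qed
    show "\<forall>s t. s < t \<and> t < length xs \<and> fs' ! s = fs' ! t \<longrightarrow> xs ! s \<ge> xs ! t"
    proof (intro allI impI)
      fix s t assume a: "s < t \<and> t < length xs \<and> fs' ! s = fs' ! t"
      then have "(x#xs)!(Suc s) \<ge> (x#xs)!(Suc t)" using Cons.prems(5) fs
        by (metis Suc_less_eq length_Cons nth_Cons_Suc)
      then show "xs ! s \<ge> xs ! t" by simp
    qed
  qed
  have su: "(\<Sum>g<k. int ((pos(f:=x)) g)) = (\<Sum>g<k. int (pos g)) - int (pos f) + int x"
    using sum_upd[OF fk, of "\<lambda>v. int v" pos x] by simp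
  show ?case using IH su td pf fs by simp
qed


lemma Fk_le:
  assumes "is_bst_on n T" "\<forall>i<k. l i \<in> {1..n}" "length fs = length X" "set fs \<subseteq> {0..<k}"
  shows "Fk k n X \<le> finger_cost T l X fs"
proof -
  have "Fk_T k n T X \<le> finger_cost T l X fs"
    unfolding Fk_T_def by (rule Least_le) (use assms in blast)
  moreover have "Fk k n X \<le> Fk_T k n T X"
    unfolding Fk_def by (rule Least_le) (use assms in blast)
  ultimately show ?thesis by simp
qed

theorem theorem11:
  shows "\<exists>c::real. c > 0 \<and>
    (\<forall>k n m (X :: nat list). k \<ge> 1 \<longrightarrow> 1 \<le> n \<longrightarrow> n \<le> m \<longrightarrow> length X = m \<longrightarrow>
       set X \<subseteq> {1..n} \<longrightarrow> k_monotone k X \<longrightarrow>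
       real (Fk k n X) \<le> c * real k * real (length X))"
proof (intro exI[of _ 2] conjI allI impI)
  fix k n m :: nat and X :: "nat list"
  assume k1: "k \<ge> 1" and n1: "1 \<le> n" and nm: "n \<le> m" and len: "length X = m"
    and sX: "set X \<subseteq> {1..n}" and km: "k_monotone k X"
  obtain g where gk: "\<forall>t<length X. g t < k" and mono:
     "(\<forall>i j. i < j \<and> j < length X \<and> g i = g j \<longrightarrow> X ! i \<le> X ! j) \<or>
      (\<forall>i j. i < j \<and> j < length X \<and> g i = g j \<longrightarrow> X ! i \<ge> X ! j)"
    using km unfolding k_monotone_def by blast
  define T where "T = spine 1 n"
  define fs where "fs = map g [0..<length X]"
  have bst: "is_bst_on n T" unfolding T_def by (rule bst_spine)
  have TD: "\<forall>a\<in>{1..n}. \<forall>b\<in>{1..n}. tdist T a b = (a-b)+(b-a)"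
    unfolding T_def using tdist_spine by blast
  have lfs: "length fs = length X" unfolding fs_def by simp
  have sfs: "set fs \<subseteq> {0..<k}" unfolding fs_def using gk by auto
  have fsn: "\<And>t. t < length X \<Longrightarrow> fs ! t = g t" unfolding fs_def by simp
  have Xt: "\<And>t. t < length X \<Longrightarrow> X ! t \<in> {1..n}" using sX nth_mem by blast
  have "int (Fk k n X) \<le> int m + int k * int n"
  proof (cases "\<forall>i j. i < j \<and> j < length X \<and> g i = g j \<longrightarrow> X ! i \<le> X ! j")
    case True
    have "Fk k n X \<le> finger_cost T (\<lambda>_. 1) X fs"
      by (rule Fk_le[OF bst _ lfs sfs]) (use n1 in auto)
    moreover have "int (finger_cost T (\<lambda>_. 1) X fs) \<le> int (length X) + (\<Sum>f<k. int n - int 1)"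
      by (rule inc_bound[OF TD lfs sX]) (use n1 gk fsn Xt True in auto)
    moreover have "int k * (int n - 1) \<le> int k * int n" by (simp add: mult_left_mono)
    ultimately show ?thesis using len n1 by simp
  next
    case False
    then have D: "\<forall>i j. i < j \<and> j < length X \<and> g i = g j \<longrightarrow> X ! i \<ge> X ! j" using mono by blast
    have "Fk k n X \<le> finger_cost T (\<lambda>_. n) X fs"
      by (rule Fk_le[OF bst _ lfs sfs]) (use n1 in auto)
    moreover have "int (finger_cost T (\<lambda>_. n) X fs) \<le> int (length X) + (\<Sum>f<k. int n)"
      by (rule dec_bound[OF TD lfs sX]) (use n1 gk fsn Xt D in auto)
    ultimately show ?thesis using len by simp
  qed
  then have "Fk k n X \<le> m + k * n" by (metis of_nat_add of_nat_mult of_nat_le_iff)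
  then have "real (Fk k n X) \<le> real (m + k * n)" by (simp only: of_nat_le_iff)
  then have "real (Fk k n X) \<le> real m + real k * real n" by simp
  also have "\<dots> \<le> 2 * real k * real (length X)"
  proof -
    have "1 * real m \<le> real k * real m" using k1 by (intro mult_right_mono) auto
    moreover have "real k * real n \<le> real k * real m" using nm by (simp add: mult_left_mono)
    ultimately show ?thesis using len by simp
  qed
  finally show "real (Fk k n X) \<le> 2 * real k * real (length X)" .
qed (simp)

end
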